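(* Let $X=[0,1]^{\mathbb N_0}$ with shift $\sigma$, let $h\in C^2([0,1]^2;\mathbb R)$ satisfy $D_2D_1h<0$ on $[0,1]^2$, and $\varphi(\underline{x})=h(x_0,x_1)$. Then the Mañé set is \[N_\varphi=\{\underline{x}\in X: \sigma^i(\underline{x})\neq\sigma^j(\underline{x})\text{ whenever } i\neq j\}\ \cup\ \bigcup_{M\in\mathbb N_0}\sigma^{-M}\big(\{a^\infty: a\in\mathrm{m}_h\}\big).\]
   Context: $X=[0,1]^{\mathbb N_0}$ carries the metric $d_X(\underline{x},\underline{y})=\sum_{i\ge0}|x_i-y_i|/2^{i+1}$, and $\sigma(\underline{x})_i=x_{i+1}$. For Lipschitz $\varphi$, $\alpha_\varphi=\inf_\mu\int\varphi\,d\mu$ over $\sigma$-invariant Borel probability measures. $B(\underline{x},\underline{y},n;\varepsilon)=\{\underline{z}: d_X(\underline{x},\underline{z})<\varepsilon,\ d_X(\sigma^n\underline{z},\underline{y})<\varepsilon\}$, and the Mañé potential is $S_\varphi(\underline{x},\underline{y})=\lim_{\varepsilon\to0}\inf\{\sum_{i=0}^{n-1}(\varphi(\sigma^i\underline{z})-\alpha_\varphi): n\in\mathbb N,\ \underline{z}\in B(\underline{x},\underline{y},n;\varepsilon)\}$. A positive orbit $\{\sigma^n\underline{x}\}_{n\ge0}$ is $\varphi$-semi-static if $\sum_{n=i}^{j-1}(\varphi(\sigma^n\underline{x})-\alpha_\varphi)=S_\varphi(\sigma^i\underline{x},\sigma^j\underline{x})$ for all integers $0\le i<j$. The Mañé set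 is $N_\varphi=\{\sigma^k(\underline{x}): k\in\mathbb N_0,\ \{\sigma^n\underline{x}\}_{n\ge0}\text{ is }\varphi\text{-semi-static}\}$. $h^*=\min_x h(x,x)$, $\mathrm{m}_h=\{a:h(a,a)=h^*\}$, $a^\infty=aaa\ldots$. *)

theory Defs
  imports "HOL-Analysis.Analysis" "HOL-Probability.Probability"
begin

definition Xset :: "(nat \<Rightarrow> real) set" where
  "Xset = {x. \<forall>i. x i \<in> {0..1}}"

definition dX :: "(nat \<Rightarrow> real) \<Rightarrow> (nat \<Rightarrow> real) \<Rightarrow> real" where
  "dX x y = (\<Sum>i. \<bar>x i - y i\<bar> / 2 ^ (i + 1))"

definition shift :: "(nat \<Rightarrow> real) \<Rightarrow> (nat \<Rightarrow> real)" where
  "shift x = (\<lambda>i. x (Suc i))"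

text \<open>Shift-invariant Borel probability measures on X (Borel sets of the product
  topology, which is the topology of dX on X).\<close>
definition invariant_measure :: "(nat \<Rightarrow> real) measure \<Rightarrow> bool" where
  "invariant_measure \<mu> \<longleftrightarrow>
     sets \<mu> = sets (restrict_space borel Xset) \<and> prob_space \<mu> \<and>
     shift \<in> measurable \<mu> \<mu> \<and> distr \<mu> \<mu> shift = \<mu>"

definition alpha :: "((nat \<Rightarrow> real) \<Rightarrow> real) \<Rightarrow> real" where
  "alpha \<phi> = Inf {integral\<^sup>L \<mu> \<phi> | \<mu>. invariant_measure \<mu>}"

definition Bset :: "(nat \<Rightarrow> real) \<Rightarrow> (nat \<Rightarrow> real) \<Rightarrow> nat \<Rightarrow> real \<Rightarrow> (nat \<Rightarrow> real) set" where
  "Bset x y n \<epsilon> = {z \<in> Xset. dX x z < \<epsilon> \<and> dX ((shift ^^ n) z) y < \<epsilon>}"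

definition bsum :: "((nat \<Rightarrow> real) \<Rightarrow> real) \<Rightarrow> nat \<Rightarrow> (nat \<Rightarrow> real) \<Rightarrow> real" where
  "bsum \<phi> n z = (\<Sum>i<n. \<phi> ((shift ^^ i) z) - alpha \<phi>)"

definition mane_pot :: "((nat \<Rightarrow> real) \<Rightarrow> real) \<Rightarrow> (nat \<Rightarrow> real) \<Rightarrow> (nat \<Rightarrow> real) \<Rightarrow> ereal" where
  "mane_pot \<phi> x y = Lim (at_right (0::real))
     (\<lambda>\<epsilon>. INF p \<in> {(n, z). n \<ge> 1 \<and> z \<in> Bset x y n \<epsilon>}. ereal (bsum \<phi> (fst p) (snd p)))"

definition semi_static :: "((nat \<Rightarrow> real) \<Rightarrow> real) \<Rightarrow> (nat \<Rightarrow> real) \<Rightarrow> bool" where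
  "semi_static \<phi> x \<longleftrightarrow>
     (\<forall>i j. i < j \<longrightarrow>
        ereal (\<Sum>n\<in>{i..<j}. \<phi> ((shift ^^ n) x) - alpha \<phi>)
          = mane_pot \<phi> ((shift ^^ i) x) ((shift ^^ j) x))"

definition mane_set :: "((nat \<Rightarrow> real) \<Rightarrow> real) \<Rightarrow> (nat \<Rightarrow> real) set" where
  "mane_set \<phi> = {(shift ^^ k) x | k x. x \<in> Xset \<and> semi_static \<phi> x}"

text \<open>h is C^2 on the closed square [0,1]^2 (derivatives within the square), with
  first partials h1, h2 and second partials hij = D_j (h_i); D2 D1 h = h12.\<close>
definition C2_square_neg_mixed :: "(real \<times> real \<Rightarrow> real) \<Rightarrow> bool" where
  "C2_square_neg_mixed h \<longleftrightarrow>
    (\<exists>h1 h2 h11 h12 h21 h22.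
      (\<forall>p\<in>{0..1} \<times> {0..1}.
         (h has_derivative (\<lambda>(u, v). h1 p * u + h2 p * v)) (at p within {0..1} \<times> {0..1}) \<and>
         (h1 has_derivative (\<lambda>(u, v). h11 p * u + h12 p * v)) (at p within {0..1} \<times> {0..1}) \<and>
         (h2 has_derivative (\<lambda>(u, v). h21 p * u + h22 p * v)) (at p within {0..1} \<times> {0..1}) \<and>
         h12 p < 0) \<and>
      continuous_on ({0..1} \<times> {0..1}) h11 \<and> continuous_on ({0..1} \<times> {0..1}) h12 \<and>
      continuous_on ({0..1} \<times> {0..1}) h21 \<and> continuous_on ({0..1} \<times> {0..1}) h22)"

definition hstar :: "(real \<times> real \<Rightarrow> real) \<Rightarrow> real" where
  "hstar h = (INF a\<in>{0..1}. h (a, a))"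

definition min_set :: "(real \<times> real \<Rightarrow> real) \<Rightarrow> real set" where
  "min_set h = {a \<in> {0..1}. h (a, a) = hstar h}"

end

theory Submission
  imports Defs
begin


lemma incr_within:
  fixes g g' :: "real \<Rightarrow> real"
  assumes ab: "a < b"
    and d: "\<And>t. t \<in> {a..b} \<Longrightarrow> (g has_real_derivative g' t) (at t within {a..b})"
    and p: "\<And>t. a < t \<Longrightarrow> t < b \<Longrightarrow> g' t > 0"
  shows "g a < g b"
proof (rule DERIV_pos_imp_increasing_open[OF ab])
  show "continuous_on {a..b} g"
    using d by (meson DERIV_continuous continuous_on_eq_continuous_within)
  fix x assume "a < x" "x < b"
  then show "\<exists>y. DERIV g x :> y \<and> y > 0"
    using d[of x] p[of x] at_within_Icc_at[of a x b] by auto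
qed

definition "Sq = {0..1::real} \<times> {0..1::real}"

locale twist =
  fixes h h1 h2 h11 h12 :: "real \<times> real \<Rightarrow> real"
  assumes dh: "\<And>p. p \<in> Sq \<Longrightarrow> (h has_derivative (\<lambda>(u, v). h1 p * u + h2 p * v)) (at p within Sq)"
    and dh1: "\<And>p. p \<in> Sq \<Longrightarrow> (h1 has_derivative (\<lambda>(u, v). h11 p * u + h12 p * v)) (at p within Sq)"
    and neg: "\<And>p. p \<in> Sq \<Longrightarrow> h12 p < 0"
begin

lemma d_h1_2:
  assumes x: "x \<in> {0..1}" and t: "t \<in> {0..1}"
  shows "((\<lambda>t. h1 (x, t)) has_real_derivative h12 (x, t)) (at t within {0..1})"
proof -
  have "((\<lambda>t. h1 (x, t)) has_derivative (\<lambda>v. (\<lambda>(u, v). h11 (x,t) * u + h12 (x,t) * v) (0, v))) (at t within {0..1})"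
    by (rule has_derivative_in_compose2[where t=Sq and g=h1 and f="\<lambda>t. (x,t)"])
       (use dh1 x t in \<open>auto simp: Sq_def intro!: derivative_eq_intros\<close>)
  moreover have "(\<lambda>v. (\<lambda>(u, v). h11 (x,t) * u + h12 (x,t) * v) (0, v)) = (*) (h12 (x, t))"
    by (auto simp: fun_eq_iff)
  ultimately show ?thesis by (simp add: has_field_derivative_def)
qed

lemma d_h_1:
  assumes y: "y \<in> {0..1}" and t: "t \<in> {0..1}"
  shows "((\<lambda>t. h (t, y)) has_real_derivative h1 (t, y)) (at t within {0..1})"
proof -
  have "((\<lambda>t. h (t, y)) has_derivative (\<lambda>v. (\<lambda>(u, v). h1 (t,y) * u + h2 (t,y) * v) (v, 0))) (at t within {0..1})"
    by (rule has_derivative_in_compose2[where t=Sq and g=h and f="\<lambda>t. (t,y)"])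
       (use dh y t in \<open>auto simp: Sq_def intro!: derivative_eq_intros\<close>)
  moreover have "(\<lambda>v. (\<lambda>(u, v). h1 (t,y) * u + h2 (t,y) * v) (v, 0)) = (*) (h1 (t, y))"
    by (auto simp: fun_eq_iff)
  ultimately show ?thesis by (simp add: has_field_derivative_def)
qed

lemma h1_decr:
  assumes x: "x \<in> {0..1}" and "0 \<le> y" "y < y'" "y' \<le> 1"
  shows "h1 (x, y') < h1 (x, y)"
proof -
  have "(\<lambda>t. - h1 (x, t)) y < (\<lambda>t. - h1 (x, t)) y'"
  proof (rule incr_within[where g'="\<lambda>t. - h12 (x,t)" and g="\<lambda>t. - h1 (x, t)"])
    fix t assume "t \<in> {y..y'}"
    then have "t \<in> {0..1}" using assms by auto
    from DERIV_subset[OF d_h1_2[OF x this], of "{y..y'}"] show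
      "((\<lambda>t. - h1 (x, t)) has_real_derivative - h12 (x, t)) (at t within {y..y'})"
      using assms by (auto intro: DERIV_minus)
  next
    fix t assume "y < t" "t < y'"
    then show "0 < - h12 (x, t)" using neg[of "(x,t)"] assms by (auto simp: Sq_def)
  qed (use assms in auto)
  then show ?thesis by simp
qed

lemma h_cont: "continuous_on Sq h"
  using dh by (rule has_derivative_continuous_on)

lemma h1_cont: "continuous_on Sq h1"
  using dh1 by (rule has_derivative_continuous_on)

lemma diag_cont: "continuous_on {0..1} (\<lambda>s. h1 (s, s))"
  by (rule continuous_on_compose2[OF h1_cont]) (auto simp: Sq_def intro!: continuous_intros)

definition f :: "real \<Rightarrow> real" where "f x = integral {0..x} (\<lambda>s. h1 (s, s))"

lemma f_deriv: "t \<in> {0..1} \<Longrightarrow> (f has_real_derivative h1 (t, t)) (at t within {0..1})"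
  unfolding f_def[abs_def] by (rule integral_has_real_derivative[OF diag_cont])

lemma f_cont: "continuous_on {0..1} f"
  using f_deriv by (meson DERIV_continuous continuous_on_eq_continuous_within)

lemma psi_deriv:
  assumes "y \<in> {0..1}" "t \<in> {0..1}" "{a..b} \<subseteq> {0..1}"
  shows "((\<lambda>t. f t - h (t, y)) has_real_derivative h1 (t, t) - h1 (t, y)) (at t within {a..b})"
  using DERIV_subset[OF DERIV_diff[OF f_deriv d_h_1] assms(3)] assms by auto

lemma key_strict:
  assumes x: "x \<in> {0..1}" and y: "y \<in> {0..1}" and ne: "x \<noteq> y"
  shows "f x - f y + h (y, y) < h (x, y)"
proof (cases "x < y")
  case True
  have "(\<lambda>t. f t - h (t, y)) x < (\<lambda>t. f t - h (t, y)) y"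
  proof (rule incr_within[where g'="\<lambda>t. h1 (t, t) - h1 (t, y)" and g="\<lambda>t. f t - h (t, y)"])
    fix t assume "t \<in> {x..y}"
    then show "((\<lambda>t. f t - h (t, y)) has_real_derivative h1 (t, t) - h1 (t, y)) (at t within {x..y})"
      using x y by (intro psi_deriv) auto
  next
    fix t assume "x < t" "t < y"
    then show "0 < h1 (t, t) - h1 (t, y)" using h1_decr[of t t y] x y by auto
  qed (use True in auto)
  then show ?thesis by simp
next
  case False
  then have yx: "y < x" using ne by auto
  have "(\<lambda>t. - (f t - h (t, y))) y < (\<lambda>t. - (f t - h (t, y))) x"
  proof (rule incr_within[where g'="\<lambda>t. - (h1 (t, t) - h1 (t, y))" and g="\<lambda>t. - (f t - h (t, y))"])
    fix t assume "t \<in> {y..x}"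
    then show "((\<lambda>t. - (f t - h (t, y))) has_real_derivative - (h1 (t, t) - h1 (t, y))) (at t within {y..x})"
      using DERIV_minus[OF psi_deriv[of y t y x]] x y by auto
  next
    fix t assume "y < t" "t < x"
    then show "0 < - (h1 (t, t) - h1 (t, y))" using h1_decr[of t y t] x y by auto
  qed (use yx in auto)
  then show ?thesis by simp
qed

lemma key:
  assumes x: "x \<in> {0..1}" and y: "y \<in> {0..1}"
  shows "f x - f y + h (y, y) \<le> h (x, y)"
  using key_strict[OF x y] by (cases "x = y") force+

end



lemma Xset_coord: "x \<in> Xset \<Longrightarrow> x i \<in> {0..1}" by (simp add: Xset_def)

lemma shift_pow_apply: "(shift ^^ n) x i = x (n + i)"
  by (induction n arbitrary: i) (auto simp: shift_def)

lemma shift_pow_Xset: "x \<in> Xset \<Longrightarrow> (shift ^^ n) x \<in> Xset"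
  by (simp add: Xset_def shift_pow_apply)

lemma shift_Xset: "x \<in> Xset \<Longrightarrow> shift x \<in> Xset"
  by (simp add: Xset_def shift_def)

lemma shift_cont: "continuous_on UNIV shift"
  unfolding shift_def by (intro continuous_on_coordinatewise_then_product) simp

lemma space_X: "space (restrict_space borel Xset) = Xset"
  by (simp add: space_restrict_space)

lemma bounded_on_Sq:
  fixes g :: "real \<times> real \<Rightarrow> real"
  assumes "continuous_on Sq g" obtains B where "\<And>p. p \<in> Sq \<Longrightarrow> \<bar>g p\<bar> \<le> B"
proof -
  have "compact Sq" by (simp add: Sq_def compact_Times)
  then have "bounded (g ` Sq)" using assms by (intro compact_imp_bounded compact_continuous_image)
  then show ?thesis using that by (auto simp: bounded_iff)
qed

lemma coord_cont: "continuous_on S (\<lambda>x::nat\<Rightarrow>real. x i)"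
  by (rule continuous_on_subset[OF continuous_on_product_coordinates]) simp

context twist begin

lemma diag_h_cont: "continuous_on {0..1} (\<lambda>a. h (a, a))"
  by (rule continuous_on_compose2[OF h_cont]) (auto simp: Sq_def intro!: continuous_intros)

lemma hstar_le: "a \<in> {0..1} \<Longrightarrow> hstar h \<le> h (a, a)"
  unfolding hstar_def
proof (rule cINF_lower)
  have "bounded ((\<lambda>a. h (a, a)) ` {0..1})"
    by (intro compact_imp_bounded compact_continuous_image diag_h_cont) auto
  then show "bdd_below ((\<lambda>a. h (a, a)) ` {0..1})" by (rule bounded_imp_bdd_below)
qed

lemma hstar_attained: obtains a where "a \<in> {0..1}" "h (a, a) = hstar h"
proof -
  obtain a where a: "a \<in> {0..1}" "\<forall>y\<in>{0..1}. h (a, a) \<le> h (y, y)"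
    using continuous_attains_inf[OF _ _ diag_h_cont] by auto
  have "hstar h = h (a, a)" unfolding hstar_def
    by (rule antisym, rule hstar_le[unfolded hstar_def, OF a(1)], rule cINF_greatest) (use a in auto)
  then show ?thesis using that a by auto
qed

lemma phi_cont: "continuous_on Xset (\<lambda>x. h (x 0, x 1))"
proof -
  have "continuous_on Xset (\<lambda>x::nat\<Rightarrow>real. (x 0, x 1))"
    by (intro continuous_intros coord_cont)
  then show ?thesis by (rule continuous_on_compose2[OF h_cont]) (auto simp: Sq_def Xset_def)
qed

lemma F_cont: "continuous_on Xset (\<lambda>x. f (x 0))"
proof -
  have "continuous_on Xset (\<lambda>x::nat\<Rightarrow>real. x 0)"
    by (intro coord_cont)
  then show ?thesis by (rule continuous_on_compose2[OF f_cont]) (auto simp: Xset_def)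
qed

lemma key2: "x \<in> {0..1} \<Longrightarrow> y \<in> {0..1} \<Longrightarrow> hstar h + f x - f y \<le> h (x, y)"
  using key[of x y] hstar_le[of y] by auto

lemma alpha_lower:
  assumes inv: "invariant_measure \<mu>"
  shows "hstar h \<le> integral\<^sup>L \<mu> (\<lambda>x. h (x 0, x 1))"
proof -
  have sets: "sets \<mu> = sets (restrict_space borel Xset)" and ps: "prob_space \<mu>"
    and sm: "shift \<in> measurable \<mu> \<mu>" and di: "distr \<mu> \<mu> shift = \<mu>"
    using inv by (auto simp: invariant_measure_def)
  interpret prob_space \<mu> by (rule ps)
  have sp: "space \<mu> = Xset" using sets_eq_imp_space_eq[OF sets] space_X by simp
  have mc: "(\<mu> \<rightarrow>\<^sub>M (borel::real measure)) = (restrict_space borel Xset \<rightarrow>\<^sub>M borel)"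
    by (rule measurable_cong_sets[OF sets refl])
  have mphi: "(\<lambda>x. h (x 0, x 1)) \<in> borel_measurable \<mu>"
    using borel_measurable_continuous_on_restrict[OF phi_cont] mc by simp
  have mF: "(\<lambda>x. f (x 0)) \<in> borel_measurable \<mu>"
    using borel_measurable_continuous_on_restrict[OF F_cont] mc by simp
  have mFs: "(\<lambda>x. f (shift x 0)) \<in> borel_measurable \<mu>"
    using measurable_comp[OF sm mF] by (simp add: comp_def)
  obtain B1 where B1: "\<And>p. p \<in> Sq \<Longrightarrow> \<bar>h p\<bar> \<le> B1" using bounded_on_Sq[OF h_cont] by blast
  have fSq: "continuous_on Sq (\<lambda>p. f (fst p))"
    by (rule continuous_on_compose2[OF f_cont]) (auto simp: Sq_def intro!: continuous_intros)
  obtain B2 where B2: "\<And>p. p \<in> Sq \<Longrightarrow> \<bar>f (fst p)\<bar> \<le> B2" using bounded_on_Sq[OF fSq] by blast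
  have inSq: "x \<in> Xset \<Longrightarrow> (x i, x j) \<in> Sq" for x i j by (simp add: Sq_def Xset_def)
  have iphi: "integrable \<mu> (\<lambda>x. h (x 0, x 1))"
    by (rule integrable_const_bound[where B=B1]) (use mphi B1 inSq sp in \<open>auto intro!: AE_I2\<close>)
  have bF: "x \<in> Xset \<Longrightarrow> \<bar>f (x i)\<bar> \<le> B2" for x i using B2[of "(x i, x i)"] inSq[of x i i] by simp
  have iF: "integrable \<mu> (\<lambda>x. f (x 0))"
    by (rule integrable_const_bound[where B=B2]) (use mF bF sp in \<open>auto intro!: AE_I2\<close>)
  have iFs: "integrable \<mu> (\<lambda>x. f (shift x 0))"
    by (rule integrable_const_bound[where B=B2]) (use mFs bF shift_Xset sp in \<open>auto intro!: AE_I2\<close>)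
  have eq: "integral\<^sup>L \<mu> (\<lambda>x. f (shift x 0)) = integral\<^sup>L \<mu> (\<lambda>x. f (x 0))"
    using integral_distr[OF sm mF] di by simp
  have "integral\<^sup>L \<mu> (\<lambda>x. hstar h + f (x 0) - f (shift x 0)) \<le> integral\<^sup>L \<mu> (\<lambda>x. h (x 0, x 1))"
  proof (rule integral_mono)
    show "integrable \<mu> (\<lambda>x. hstar h + f (x 0) - f (shift x 0))" using iF iFs by auto
    show "integrable \<mu> (\<lambda>x. h (x 0, x 1))" by (rule iphi)
    fix x assume "x \<in> space \<mu>"
    then show "hstar h + f (x 0) - f (shift x 0) \<le> h (x 0, x 1)"
      using key2[of "x 0" "x 1"] sp by (auto simp: shift_def Xset_def)
  qed
  moreover have "integral\<^sup>L \<mu> (\<lambda>x. hstar h + f (x 0) - f (shift x 0)) = hstar h"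
    using iF iFs eq by (simp add: prob_space)
  ultimately show ?thesis by simp
qed

lemma dirac_invariant:
  assumes a: "a \<in> {0..1}"
  shows "invariant_measure (return (restrict_space borel Xset) (\<lambda>_. a))"
    and "integral\<^sup>L (return (restrict_space borel Xset) (\<lambda>_. a)) (\<lambda>x. h (x 0, x 1)) = h (a, a)"
proof -
  let ?M = "restrict_space borel Xset"
  let ?R = "return ?M (\<lambda>_. a)"
  have c: "(\<lambda>_. a) \<in> space ?M" using a space_X by (simp add: Xset_def)
  have sets: "sets ?R = sets ?M" by simp
  have shm: "shift \<in> measurable ?M ?M"
    by (rule measurable_restrict_space3[OF borel_measurable_continuous_onI[OF shift_cont]])
       (auto simp: shift_Xset)
  have mc1: "measurable ?R ?R = measurable ?M ?M" by (rule measurable_cong_sets[OF sets sets])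
  have mc2: "measurable ?M ?R = measurable ?M ?M" by (rule measurable_cong_sets[OF refl sets])
  have shR: "shift \<in> measurable ?R ?R" using shm mc1 by simp
  have "distr ?R ?R shift = return ?R (shift (\<lambda>_. a))"
    by (rule distr_return) (use c shm mc2 in simp_all)
  also have "\<dots> = ?R" by (simp add: shift_def return_cong[OF sets])
  finally show "invariant_measure ?R"
    unfolding invariant_measure_def using sets prob_space_return[OF c] shR by auto
  show "integral\<^sup>L ?R (\<lambda>x. h (x 0, x 1)) = h (a, a)"
    by (subst integral_return[OF c]) (use borel_measurable_continuous_on_restrict[OF phi_cont] in simp_all)
qed

lemma alpha_eq: "alpha (\<lambda>x. h (x 0, x 1)) = hstar h"
proof -
  obtain a where a: "a \<in> {0..1}" "h (a, a) = hstar h" by (rule hstar_attained)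
  show ?thesis unfolding alpha_def
  proof (rule cInf_eq_minimum)
    show "hstar h \<in> {integral\<^sup>L \<mu> (\<lambda>x. h (x 0, x 1)) |\<mu>. invariant_measure \<mu>}"
      using dirac_invariant[OF a(1)] a(2) by force
  qed (use alpha_lower in auto)
qed

end



context twist begin

lemma alpha_eq': "alpha (\<lambda>x. h (x 0, x (Suc 0))) = hstar h"
  using alpha_eq by simp

lemma bsum_eq: "bsum (\<lambda>x. h (x 0, x 1)) n z = (\<Sum>k<n. h (z k, z (Suc k)) - hstar h)"
  by (simp add: bsum_def alpha_eq' shift_pow_apply)

lemma ss_iff: "semi_static (\<lambda>x. h (x 0, x 1)) x \<longleftrightarrow>
   (\<forall>i j. i < j \<longrightarrow> ereal (\<Sum>n\<in>{i..<j}. h (x n, x (Suc n)) - hstar h)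
        = mane_pot (\<lambda>x. h (x 0, x 1)) ((shift ^^ i) x) ((shift ^^ j) x))"
  by (simp add: semi_static_def alpha_eq' shift_pow_apply)

lemma periodic_case:
  assumes X: "x \<in> Xset" and ss: "semi_static (\<lambda>x. h (x 0, x 1)) x" and ij: "i < j"
    and per: "(shift ^^ i) x = (shift ^^ j) x"
  shows "(shift ^^ i) x = (\<lambda>_. x i)" and "x i \<in> min_set h"
proof -
  define L where "L = j - i"
  define g where "g n = h (x n, x (Suc n)) - hstar h" for n
  define T where "T p q = (\<Sum>n\<in>{p..<q}. g n)" for p q
  have perx: "x (i + k) = x (j + k)" for k using fun_cong[OF per, of k] by (simp add: shift_pow_apply)
  have perL: "x (m + L) = x m" if "m \<ge> i" for m
  proof -
    have "x (i + (m - i)) = x (j + (m - i))" by (rule perx)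
    moreover have "i + (m - i) = m" "j + (m - i) = m + L" using that ij by (auto simp: L_def)
    ultimately show ?thesis by simp
  qed
  have sh: "(shift ^^ (j + L)) x = (shift ^^ j) x"
  proof
    fix k show "(shift ^^ (j + L)) x k = (shift ^^ j) x k"
      using perL[of "j + k"] ij by (simp add: shift_pow_apply add.commute add.left_commute)
  qed
  have ssx: "\<And>p q. p < q \<Longrightarrow> ereal (T p q) = mane_pot (\<lambda>x. h (x 0, x 1)) ((shift ^^ p) x) ((shift ^^ q) x)"
    using ss unfolding ss_iff T_def g_def by simp
  have e1: "ereal (T i j) = mane_pot (\<lambda>x. h (x 0, x 1)) ((shift ^^ i) x) ((shift ^^ j) x)"
    by (rule ssx[OF ij])
  have e2: "ereal (T i (j + L)) = mane_pot (\<lambda>x. h (x 0, x 1)) ((shift ^^ i) x) ((shift ^^ (j + L)) x)"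
    by (rule ssx) (use ij in simp)
  have "ereal (T i j) = ereal (T i (j + L))" unfolding e1 e2 sh ..
  then have TT: "T i j = T i (j + L)" by simp
  have "T i (j + L) = T i j + T j (j + L)" unfolding T_def
    by (rule sum.atLeastLessThan_concat[symmetric]) (use ij in auto)
  moreover have "T j (j + L) = T i j"
  proof -
    have jL: "j = i + L" using ij by (simp add: L_def)
    have "T j (j + L) = (\<Sum>n\<in>{i..<j}. g (n + L))"
      unfolding T_def jL by (rule sum.shift_bounds_nat_ivl)
    also have "\<dots> = T i j" unfolding T_def g_def
    proof (rule sum.cong)
      fix n assume "n \<in> {i..<j}"
      then have "x (n + L) = x n" "x (Suc n + L) = x (Suc n)" using perL[of n] perL[of "Suc n"] by auto
      then show "h (x (n + L), x (Suc (n + L))) - hstar h = h (x n, x (Suc n)) - hstar h" by simp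
    qed simp
    finally show ?thesis .
  qed
  ultimately have T0: "T i j = 0" using TT by simp
  define d where "d n = g n - (f (x n) - f (x (Suc n)))" for n
  have xin: "x m \<in> {0..1}" for m using X by (simp add: Xset_def)
  have dge: "d n \<ge> h (x (Suc n), x (Suc n)) - hstar h" for n
    using key[OF xin xin, of n "Suc n"] by (simp add: d_def g_def)
  have dnn: "d n \<ge> 0" for n using dge[of n] hstar_le[OF xin, of "Suc n"] by simp
  have "(\<Sum>n\<in>{i..<j}. d n) = T i j - (\<Sum>n\<in>{i..<j}. f (x n) - f (x (Suc n)))"
    by (simp add: d_def T_def sum_subtractf)
  also have "(\<Sum>n\<in>{i..<j}. f (x n) - f (x (Suc n))) = - (\<Sum>n\<in>{i..<j}. f (x (Suc n)) - f (x n))"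
    by (simp add: sum_negf[symmetric])
  also have "(\<Sum>n\<in>{i..<j}. f (x (Suc n)) - f (x n)) = f (x j) - f (x i)"
    using ij by (intro sum_Suc_diff') simp
  also have "x j = x i" using perx[of 0] by simp
  finally have "(\<Sum>n\<in>{i..<j}. d n) = 0" using T0 by simp
  then have d0: "\<forall>n\<in>{i..<j}. d n = 0" using sum_nonneg_eq_0_iff[of "{i..<j}" d] dnn by simp
  have step: "x (Suc n) = x n \<and> h (x (Suc n), x (Suc n)) = hstar h" if "i \<le> n" "n < j" for n
  proof -
    have dn: "d n = 0" using d0 that by auto
    have "x n = x (Suc n)"
    proof (rule ccontr)
      assume "x n \<noteq> x (Suc n)"
      from key_strict[OF xin xin this] have "d n > h (x (Suc n), x (Suc n)) - hstar h"
        by (simp add: d_def g_def)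
      then show False using dn hstar_le[OF xin, of "Suc n"] by simp
    qed
    then show ?thesis using dn dge[of n] hstar_le[OF xin, of "Suc n"] by simp
  qed
  have c1: "x m = x i" if "i \<le> m" "m \<le> j" for m
    using that
  proof (induction m)
    case 0 then show ?case by simp
  next
    case (Suc m)
    show ?case
    proof (cases "i = Suc m")
      case True then show ?thesis by simp
    next
      case False
      then have "i \<le> m" "m < j" using Suc.prems by auto
      then show ?thesis using Suc.IH step[of m] by simp
    qed
  qed
  have call: "x m = x i" if "i \<le> m" for m
    using that
  proof (induction m rule: less_induct)
    case (less m)
    show ?case
    proof (cases "m \<le> j")
      case True then show ?thesis using c1[of m] less.prems by simp
    next
      case False
      then have "i \<le> m - L" "m - L < m" "m - L + L = m" using ij by (auto simp: L_def)
      then show ?thesis using less.IH[of "m - L"] perL[of "m - L"] by simp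
    qed
  qed
  show "(shift ^^ i) x = (\<lambda>_. x i)"
  proof
    fix k
    have "x (i + k) = x i" by (rule call) simp
    then show "(shift ^^ i) x k = x i" by (simp add: shift_pow_apply)
  qed
  have s1: "x (Suc i) = x i" and s2: "h (x (Suc i), x (Suc i)) = hstar h" using step[of i] ij by auto
  have "h (x i, x i) = hstar h" using s2 unfolding s1 .
  then show "x i \<in> min_set h" using xin[of i] by (simp add: min_set_def)
qed

lemma subset_dir:
  assumes "y \<in> mane_set (\<lambda>x. h (x 0, x 1))"
  shows "y \<in> {x \<in> Xset. \<forall>i j. i \<noteq> j \<longrightarrow> (shift ^^ i) x \<noteq> (shift ^^ j) x}
           \<union> (\<Union>M. {x \<in> Xset. (shift ^^ M) x \<in> {(\<lambda>_. a) | a. a \<in> min_set h}})"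
proof -
  obtain k x where y: "y = (shift ^^ k) x" and X: "x \<in> Xset" and ss: "semi_static (\<lambda>x. h (x 0, x 1)) x"
    using assms by (auto simp: mane_set_def)
  have Y: "y \<in> Xset" using y X shift_pow_Xset by simp
  show ?thesis
  proof (cases "\<forall>i j. i \<noteq> j \<longrightarrow> (shift ^^ i) y \<noteq> (shift ^^ j) y")
    case True then show ?thesis using Y by simp
  next
    case False
    then obtain i0 j0 where ne: "i0 \<noteq> j0" and eq0: "(shift ^^ i0) y = (shift ^^ j0) y"
      by blast
    define i where "i = min i0 j0"
    define j where "j = max i0 j0"
    have ij: "i < j" "(shift ^^ i) y = (shift ^^ j) y"
      using ne eq0 unfolding i_def j_def by (auto simp: min_def max_def)
    have c: "(shift ^^ n) y = (shift ^^ (n + k)) x" for n by (simp add: y funpow_add)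
    have "(shift ^^ (i + k)) x = (shift ^^ (j + k)) x" using ij c by simp
    from periodic_case[OF X ss _ this] ij
    have r: "(shift ^^ i) y = (\<lambda>_. x (i + k))" "x (i + k) \<in> min_set h" using c by auto
    then have "y \<in> {x \<in> Xset. (shift ^^ i) x \<in> {(\<lambda>_. a) | a. a \<in> min_set h}}" using Y by auto
    then show ?thesis by blast
  qed
qed

end



lemma dX_summable:
  assumes "y \<in> Xset" "z \<in> Xset"
  shows "summable (\<lambda>k. \<bar>y k - z k\<bar> / 2 ^ (k + 1))"
proof (rule summable_comparison_test')
  show "summable (\<lambda>k. (1/2::real) ^ k)" by (rule summable_geometric) simp
  fix k :: nat
  have "y k \<in> {0..1}" "z k \<in> {0..1}" using assms by (auto simp: Xset_def)
  then have "\<bar>y k - z k\<bar> \<le> 1" by auto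
  then have "\<bar>y k - z k\<bar> / 2 ^ (k + 1) \<le> 1 / 2 ^ (k + 1)"
    by (intro divide_right_mono) auto
  also have "\<dots> \<le> (1/2) ^ k" by (simp add: power_divide frac_le)
  finally show "norm (\<bar>y k - z k\<bar> / 2 ^ (k + 1)) \<le> (1/2::real) ^ k" by simp
qed

lemma dX_coord:
  assumes "y \<in> Xset" "z \<in> Xset" "dX y z < \<epsilon>"
  shows "\<bar>y k - z k\<bar> < 2 ^ (k + 1) * \<epsilon>"
proof -
  have "(\<Sum>n\<in>{k}. \<bar>y n - z n\<bar> / 2 ^ (n + 1)) \<le> (\<Sum>n. \<bar>y n - z n\<bar> / 2 ^ (n + 1))"
    by (rule sum_le_suminf[OF dX_summable[OF assms(1,2)]]) auto
  then have "\<bar>y k - z k\<bar> / 2 ^ (k + 1) < \<epsilon>" using assms(3) by (simp add: dX_def)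
  then show ?thesis by (simp add: divide_less_eq mult.commute)
qed

lemma dX_self: "dX y y = 0" by (simp add: dX_def)

lemma finite_eps:
  fixes L :: nat
  assumes "\<And>n. n < L \<Longrightarrow> \<exists>e>0. \<forall>\<epsilon>::real. 0 < \<epsilon> \<and> \<epsilon> < e \<longrightarrow> R n \<epsilon>"
  shows "\<exists>e>0. \<forall>n<L. \<forall>\<epsilon>. 0 < \<epsilon> \<and> \<epsilon> < e \<longrightarrow> R n \<epsilon>"
  using assms
proof (induction L)
  case 0 show ?case by (intro exI[of _ 1]) auto
next
  case (Suc L)
  obtain e1 where e1: "e1 > 0" "\<forall>n<L. \<forall>\<epsilon>. 0 < \<epsilon> \<and> \<epsilon> < e1 \<longrightarrow> R n \<epsilon>"
    using Suc.IH Suc.prems by auto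
  obtain e2 where e2: "e2 > 0" "\<forall>\<epsilon>. 0 < \<epsilon> \<and> \<epsilon> < e2 \<longrightarrow> R L \<epsilon>"
    using Suc.prems[of L] by auto
  show ?case
    by (rule exI[of _ "min e1 e2"]) (use e1 e2 in \<open>auto simp: less_Suc_eq\<close>)
qed

lemma sum_shift_idx: fixes i m :: nat shows "(\<Sum>n\<in>{i..<i+m}. G n) = (\<Sum>k<m. G (i + k))"
  by (induction m) auto

context twist begin

lemma h_uc:
  assumes "\<eta> > 0"
  shows "\<exists>\<rho>>0. \<forall>a b a' b'. a \<in> {0..1} \<longrightarrow> b \<in> {0..1} \<longrightarrow> a' \<in> {0..1} \<longrightarrow> b' \<in> {0..1} \<longrightarrow>
     \<bar>a - a'\<bar> < \<rho> \<longrightarrow> \<bar>b - b'\<bar> < \<rho> \<longrightarrow> \<bar>h (a, b) - h (a', b')\<bar> < \<eta>"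
proof -
  have "uniformly_continuous_on Sq h"
    by (rule compact_uniformly_continuous[OF h_cont]) (simp add: Sq_def compact_Times)
  then obtain d where d: "d > 0" "\<forall>p\<in>Sq. \<forall>p'\<in>Sq. dist p' p < d \<longrightarrow> dist (h p') (h p) < \<eta>"
    unfolding uniformly_continuous_on_def using assms by metis
  show ?thesis
  proof (intro exI[of _ "d/2"] conjI allI impI)
    show "d/2 > 0" using d by simp
    fix a b a' b' :: real
    assume as: "a \<in> {0..1}" "b \<in> {0..1}" "a' \<in> {0..1}" "b' \<in> {0..1}" "\<bar>a - a'\<bar> < d/2" "\<bar>b - b'\<bar> < d/2"
    have "dist (a, b) (a', b') < d"
      unfolding dist_Pair_Pair dist_real_def by (rule sqrt_sum_squares_half_less) (use as in auto)
    then show "\<bar>h (a, b) - h (a', b')\<bar> < \<eta>"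
      using d(2) as by (auto simp: Sq_def dist_real_def)
  qed
qed

lemma f_uc:
  assumes "\<eta> > 0"
  shows "\<exists>\<rho>>0. \<forall>a a'. a \<in> {0..1} \<longrightarrow> a' \<in> {0..1} \<longrightarrow> \<bar>a - a'\<bar> < \<rho> \<longrightarrow> \<bar>f a - f a'\<bar> < \<eta>"
proof -
  have "uniformly_continuous_on {0..1} f"
    by (rule compact_uniformly_continuous[OF f_cont]) simp
  then obtain d where d: "d > 0" "\<forall>p\<in>{0..1}. \<forall>p'\<in>{0..1}. dist p' p < d \<longrightarrow> dist (f p') (f p) < \<eta>"
    unfolding uniformly_continuous_on_def using assms by metis
  show ?thesis
    by (rule exI[of _ d]) (use d in \<open>auto simp: dist_real_def\<close>)
qed

end



context twist begin

lemma lower: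
  assumes X: "x \<in> Xset"
    and Z: "\<And>p q. p < q \<Longrightarrow> (shift ^^ p) x = (shift ^^ q) x \<Longrightarrow> (\<Sum>n\<in>{p..<q}. h (x n, x (Suc n)) - hstar h) = 0"
    and ij: "i < j" and dpos: "\<delta> > 0"
  shows "\<exists>e>0. \<forall>\<epsilon>. 0 < \<epsilon> \<and> \<epsilon> < e \<longrightarrow> (\<forall>n z. 1 \<le> n \<longrightarrow> z \<in> Bset ((shift ^^ i) x) ((shift ^^ j) x) n \<epsilon> \<longrightarrow>
           (\<Sum>n\<in>{i..<j}. h (x n, x (Suc n)) - hstar h) - \<delta> \<le> bsum (\<lambda>x. h (x 0, x 1)) n z)"
proof -
  define L where "L = j - i"
  have jL: "j = i + L" using ij by (auto simp: L_def)
  define G where "G n = h (x n, x (Suc n)) - hstar h" for n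
  define T where "T p q = (\<Sum>n\<in>{p..<q}. G n)" for p q
  define \<eta> where "\<eta> = \<delta> / (real L + 2)"
  have \<eta>: "\<eta> > 0" using dpos by (simp add: \<eta>_def)
  have d\<eta>: "(real L + 2) * \<eta> = \<delta>" by (simp add: \<eta>_def)
  obtain \<rho>h where \<rho>h: "\<rho>h > 0" "\<forall>a b a' b'. a \<in> {0..1} \<longrightarrow> b \<in> {0..1} \<longrightarrow> a' \<in> {0..1} \<longrightarrow> b' \<in> {0..1} \<longrightarrow>
     \<bar>a - a'\<bar> < \<rho>h \<longrightarrow> \<bar>b - b'\<bar> < \<rho>h \<longrightarrow> \<bar>h (a, b) - h (a', b')\<bar> < \<eta>"
    using h_uc[OF \<eta>] by blast
  obtain \<rho>f where \<rho>f: "\<rho>f > 0" "\<forall>a a'. a \<in> {0..1} \<longrightarrow> a' \<in> {0..1} \<longrightarrow> \<bar>a - a'\<bar> < \<rho>f \<longrightarrow> \<bar>f a - f a'\<bar> < \<eta>"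
    using f_uc[OF \<eta>] by blast
  define \<rho> where "\<rho> = min \<rho>h \<rho>f"
  have \<rho>: "\<rho> > 0" "\<rho> \<le> \<rho>h" "\<rho> \<le> \<rho>f" using \<rho>h \<rho>f by (auto simp: \<rho>_def)
  define \<epsilon>1 where "\<epsilon>1 = \<rho> / 2 ^ (L + 2)"
  have \<epsilon>1: "\<epsilon>1 > 0" using \<rho> by (simp add: \<epsilon>1_def)
  have xin: "x m \<in> {0..1}" for m using X by (simp add: Xset_def)
  have zin: "z \<in> Xset \<Longrightarrow> z m \<in> {0..1}" for z m by (simp add: Xset_def)
  have small: "(2::real) ^ e * \<epsilon> < \<rho>" if "e \<le> L + 2" "0 < \<epsilon>" "\<epsilon> < \<epsilon>1" for e \<epsilon>
  proof -
    have "(2::real) ^ e \<le> 2 ^ (L + 2)" by (rule power_increasing) (use that in auto)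
    then have "(2::real) ^ e * \<epsilon> \<le> 2 ^ (L + 2) * \<epsilon>" using that by (intro mult_right_mono) auto
    also have "\<dots> < 2 ^ (L + 2) * \<epsilon>1" using that by simp
    also have "\<dots> = \<rho>" by (simp add: \<epsilon>1_def)
    finally show ?thesis .
  qed
  have facts: "z \<in> Xset \<and> (\<forall>k. \<bar>x (i + k) - z k\<bar> < 2 ^ (k + 1) * \<epsilon>) \<and> (\<forall>k. \<bar>z (n + k) - x (j + k)\<bar> < 2 ^ (k + 1) * \<epsilon>)"
    if "z \<in> Bset ((shift ^^ i) x) ((shift ^^ j) x) n \<epsilon>" for \<epsilon> n z
  proof -
    have zX: "z \<in> Xset" and d1: "dX ((shift ^^ i) x) z < \<epsilon>" and d2: "dX ((shift ^^ n) z) ((shift ^^ j) x) < \<epsilon>"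
      using that by (auto simp: Bset_def)
    show ?thesis
      using zX dX_coord[OF shift_pow_Xset[OF X] zX d1] dX_coord[OF shift_pow_Xset[OF zX] shift_pow_Xset[OF X] d2]
      by (simp add: shift_pow_apply)
  qed
  have bs: "bsum (\<lambda>x. h (x 0, x 1)) m z = (\<Sum>k<m. h (z k, z (Suc k)) - hstar h)" for m z
    by (rule bsum_eq)
  have Tsh: "T i (i + m) = (\<Sum>k<m. G (i + k))" for m unfolding T_def by (rule sum_shift_idx)
  have approx: "T i (i + m) - real m * \<eta> \<le> bsum (\<lambda>x. h (x 0, x 1)) m z"
    if "0 < \<epsilon>" "\<epsilon> < \<epsilon>1" "z \<in> Bset ((shift ^^ i) x) ((shift ^^ j) x) n \<epsilon>" "m \<le> L" for \<epsilon> n z m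
  proof -
    have zX: "z \<in> Xset" and A1: "\<And>k. \<bar>x (i + k) - z k\<bar> < 2 ^ (k + 1) * \<epsilon>"
      using facts[OF that(3)] by auto
    have "G (i + k) \<le> (h (z k, z (Suc k)) - hstar h) + \<eta>" if "k < m" for k
    proof -
      have "\<bar>x (i + k) - z k\<bar> < \<rho>h"
        using A1[of k] small[of "k + 1" \<epsilon>] \<open>k < m\<close> \<open>m \<le> L\<close> \<open>0 < \<epsilon>\<close> \<open>\<epsilon> < \<epsilon>1\<close> \<rho> by auto
      moreover have "\<bar>x (i + Suc k) - z (Suc k)\<bar> < \<rho>h"
        using A1[of "Suc k"] small[of "Suc k + 1" \<epsilon>] \<open>k < m\<close> \<open>m \<le> L\<close> \<open>0 < \<epsilon>\<close> \<open>\<epsilon> < \<epsilon>1\<close> \<rho> by auto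
      ultimately have "\<bar>h (x (i + k), x (i + Suc k)) - h (z k, z (Suc k))\<bar> < \<eta>"
        using \<rho>h(2) xin zin[OF zX] by blast
      then show ?thesis by (simp add: G_def)
    qed
    then have "(\<Sum>k<m. G (i + k)) \<le> (\<Sum>k<m. (h (z k, z (Suc k)) - hstar h) + \<eta>)"
      by (intro sum_mono) auto
    also have "\<dots> = bsum (\<lambda>x. h (x 0, x 1)) m z + real m * \<eta>"
      unfolding bs by (simp add: sum.distrib)
    finally show ?thesis using Tsh by simp
  qed
  have long: "T i j - \<delta> \<le> bsum (\<lambda>x. h (x 0, x 1)) n z"
    if "0 < \<epsilon>" "\<epsilon> < \<epsilon>1" "z \<in> Bset ((shift ^^ i) x) ((shift ^^ j) x) n \<epsilon>" "L \<le> n" for \<epsilon> n z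
  proof -
    have zX: "z \<in> Xset" and A1: "\<And>k. \<bar>x (i + k) - z k\<bar> < 2 ^ (k + 1) * \<epsilon>"
      and A2: "\<And>k. \<bar>z (n + k) - x (j + k)\<bar> < 2 ^ (k + 1) * \<epsilon>"
      using facts[OF that(3)] by auto
    have split: "bsum (\<lambda>x. h (x 0, x 1)) n z = bsum (\<lambda>x. h (x 0, x 1)) L z + (\<Sum>k\<in>{L..<n}. h (z k, z (Suc k)) - hstar h)"
      unfolding bs lessThan_atLeast0 using that(4) by (intro sum.atLeastLessThan_concat[symmetric]) auto
    have "(\<Sum>k\<in>{L..<n}. f (z k) - f (z (Suc k))) \<le> (\<Sum>k\<in>{L..<n}. h (z k, z (Suc k)) - hstar h)"
    proof (rule sum_mono)
      fix k show "f (z k) - f (z (Suc k)) \<le> h (z k, z (Suc k)) - hstar h"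
        using key2[OF zin[OF zX] zin[OF zX], of k "Suc k"] by simp
    qed
    moreover have "(\<Sum>k\<in>{L..<n}. f (z k) - f (z (Suc k))) = - (\<Sum>k\<in>{L..<n}. f (z (Suc k)) - f (z k))"
      by (simp add: sum_negf[symmetric])
    moreover have "(\<Sum>k\<in>{L..<n}. f (z (Suc k)) - f (z k)) = f (z n) - f (z L)"
      using that(4) by (intro sum_Suc_diff') 
    ultimately have tel: "f (z L) - f (z n) \<le> (\<Sum>k\<in>{L..<n}. h (z k, z (Suc k)) - hstar h)" by simp
    have "\<bar>x j - z L\<bar> < \<rho>f" using A1[of L] small[of "L + 1" \<epsilon>] that \<rho> jL by auto
    then have f1: "\<bar>f (x j) - f (z L)\<bar> < \<eta>" using \<rho>f(2) xin zin[OF zX] by blast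
    have "\<bar>z n - x j\<bar> < \<rho>f" using A2[of 0] small[of 1 \<epsilon>] that \<rho> by auto
    then have f2: "\<bar>f (z n) - f (x j)\<bar> < \<eta>" using \<rho>f(2) xin zin[OF zX] by blast
    have ap: "T i j - real L * \<eta> \<le> bsum (\<lambda>x. h (x 0, x 1)) L z"
      using approx[OF that(1,2,3), of L] jL by simp
    have "T i j - \<delta> = T i j - real L * \<eta> - 2 * \<eta>" using d\<eta> by (simp add: algebra_simps)
    also have "\<dots> \<le> bsum (\<lambda>x. h (x 0, x 1)) n z" using split tel f1 f2 ap by simp
    finally show ?thesis .
  qed
  have short: "\<exists>e>0. \<forall>\<epsilon>. 0 < \<epsilon> \<and> \<epsilon> < e \<longrightarrow> (\<forall>z. z \<in> Bset ((shift ^^ i) x) ((shift ^^ j) x) n \<epsilon> \<longrightarrow>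
      T i j - \<delta> \<le> bsum (\<lambda>x. h (x 0, x 1)) n z)" if "n < L" for n
  proof (cases "(shift ^^ (i + n)) x = (shift ^^ j) x")
    case True
    have "T (i + n) j = 0" unfolding T_def G_def by (rule Z[OF _ True]) (use that jL in simp)
    moreover have "T i j = T i (i + n) + T (i + n) j" unfolding T_def
      using that jL by (intro sum.atLeastLessThan_concat[symmetric]) auto
    ultimately have TT: "T i j = T i (i + n)" by simp
    have nL: "real n * \<eta> \<le> \<delta>"
    proof -
      have "real n * \<eta> \<le> (real L + 2) * \<eta>" using that \<eta> by (intro mult_right_mono) auto
      then show ?thesis using d\<eta> by simp
    qed
    show ?thesis
    proof (intro exI[of _ \<epsilon>1] conjI allI impI)
      fix \<epsilon> z assume "0 < \<epsilon> \<and> \<epsilon> < \<epsilon>1" "z \<in> Bset ((shift ^^ i) x) ((shift ^^ j) x) n \<epsilon>"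
      then have "T i (i + n) - real n * \<eta> \<le> bsum (\<lambda>x. h (x 0, x 1)) n z"
        using approx[of \<epsilon> z n n] that by auto
      then show "T i j - \<delta> \<le> bsum (\<lambda>x. h (x 0, x 1)) n z" using TT nL by simp
    qed (rule \<epsilon>1)
  next
    case False
    then obtain k where k: "x (i + n + k) \<noteq> x (j + k)"
      by (auto simp: fun_eq_iff shift_pow_apply)
    define gap where "gap = \<bar>x (i + n + k) - x (j + k)\<bar>"
    have gap: "gap > 0" using k by (simp add: gap_def)
    define S :: real where "S = 2 ^ (n + k + 1) + 2 ^ (k + 1)"
    have S: "S > 0" unfolding S_def by (intro add_pos_pos) simp_all
    show ?thesis
    proof (intro exI[of _ "gap / S"] conjI allI impI)
      show "gap / S > 0" using gap S by simp
      fix \<epsilon> z assume e: "0 < \<epsilon> \<and> \<epsilon> < gap / S" and zB: "z \<in> Bset ((shift ^^ i) x) ((shift ^^ j) x) n \<epsilon>"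
      have a1: "\<bar>x (i + (n + k)) - z (n + k)\<bar> < 2 ^ (n + k + 1) * \<epsilon>"
        and a2: "\<bar>z (n + k) - x (j + k)\<bar> < 2 ^ (k + 1) * \<epsilon>"
        using facts[OF zB] by auto
      have "gap < 2 ^ (n + k + 1) * \<epsilon> + 2 ^ (k + 1) * \<epsilon>"
        using a1 a2 unfolding gap_def by (simp add: add.assoc)
      also have "\<dots> = S * \<epsilon>" by (simp add: S_def algebra_simps)
      also have "\<dots> < gap" using e S by (simp add: less_divide_eq mult.commute)
      finally show "T i j - \<delta> \<le> bsum (\<lambda>x. h (x 0, x 1)) n z" by simp
    qed
  qed
  obtain e2 where e2: "e2 > 0" "\<forall>n<L. \<forall>\<epsilon>. 0 < \<epsilon> \<and> \<epsilon> < e2 \<longrightarrow> (\<forall>z. z \<in> Bset ((shift ^^ i) x) ((shift ^^ j) x) n \<epsilon> \<longrightarrow>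
      T i j - \<delta> \<le> bsum (\<lambda>x. h (x 0, x 1)) n z)"
    using finite_eps[of L "\<lambda>n \<epsilon>. \<forall>z. z \<in> Bset ((shift ^^ i) x) ((shift ^^ j) x) n \<epsilon> \<longrightarrow>
      T i j - \<delta> \<le> bsum (\<lambda>x. h (x 0, x 1)) n z"] short by blast
  show ?thesis
  proof (intro exI[of _ "min \<epsilon>1 e2"] conjI allI impI)
    show "min \<epsilon>1 e2 > 0" using \<epsilon>1 e2 by simp
    fix \<epsilon> n z assume e: "0 < \<epsilon> \<and> \<epsilon> < min \<epsilon>1 e2" and n1: "1 \<le> n"
      and zB: "z \<in> Bset ((shift ^^ i) x) ((shift ^^ j) x) n \<epsilon>"
    show "(\<Sum>n\<in>{i..<j}. h (x n, x (Suc n)) - hstar h) - \<delta> \<le> bsum (\<lambda>x. h (x 0, x 1)) n z"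
    proof (cases "L \<le> n")
      case True then show ?thesis using long[of \<epsilon> z n] e zB by (simp add: T_def G_def)
    next
      case False
      then have "n < L" by simp
      then have "T i j - \<delta> \<le> bsum (\<lambda>x. h (x 0, x 1)) n z" using e2(2) e zB by auto
      then show ?thesis by (simp add: T_def G_def)
    qed
  qed
qed

end



context twist begin

lemma mane_pot_eq:
  assumes X: "x \<in> Xset"
    and Z: "\<And>p q. p < q \<Longrightarrow> (shift ^^ p) x = (shift ^^ q) x \<Longrightarrow> (\<Sum>n\<in>{p..<q}. h (x n, x (Suc n)) - hstar h) = 0"
    and ij: "i < j"
  shows "mane_pot (\<lambda>x. h (x 0, x 1)) ((shift ^^ i) x) ((shift ^^ j) x) = ereal (\<Sum>n\<in>{i..<j}. h (x n, x (Suc n)) - hstar h)"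
proof -
  define D where "D = (\<Sum>n\<in>{i..<j}. h (x n, x (Suc n)) - hstar h)"
  define I where "I = (\<lambda>\<epsilon>. INF p \<in> {(n, z). n \<ge> 1 \<and> z \<in> Bset ((shift ^^ i) x) ((shift ^^ j) x) n \<epsilon>}.
      ereal (bsum (\<lambda>x. h (x 0, x 1)) (fst p) (snd p)))"
  have up: "I \<epsilon> \<le> ereal D" if "\<epsilon> > 0" for \<epsilon>
  proof -
    have "(shift ^^ (j - i)) ((shift ^^ i) x) = (shift ^^ (j - i + i)) x"
      by (simp add: funpow_add)
    then have sh: "(shift ^^ (j - i)) ((shift ^^ i) x) = (shift ^^ j) x"
      using ij by simp
    have mem: "(j - i, (shift ^^ i) x) \<in> {(n, z). n \<ge> 1 \<and> z \<in> Bset ((shift ^^ i) x) ((shift ^^ j) x) n \<epsilon>}"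
      using ij that sh shift_pow_Xset[OF X] by (simp add: Bset_def dX_self)
    have "bsum (\<lambda>x. h (x 0, x 1)) (j - i) ((shift ^^ i) x) = D"
    proof -
      have "D = (\<Sum>k<j - i. h (x (i + k), x (Suc (i + k))) - hstar h)"
        unfolding D_def using sum_shift_idx[of "\<lambda>n. h (x n, x (Suc n)) - hstar h" i "j - i"] ij by simp
      then show ?thesis unfolding bsum_eq by (simp add: shift_pow_apply)
    qed
    then show ?thesis unfolding I_def by (intro INF_lower2[OF mem]) simp
  qed
  have low: "\<forall>\<^sub>F \<epsilon> in at_right 0. ereal (D - \<delta>) \<le> I \<epsilon>" if dp: "\<delta> > 0" for \<delta>
  proof -
    obtain e where e: "e > 0" "\<forall>\<epsilon>. 0 < \<epsilon> \<and> \<epsilon> < e \<longrightarrow> (\<forall>n z. 1 \<le> n \<longrightarrow> z \<in> Bset ((shift ^^ i) x) ((shift ^^ j) x) n \<epsilon> \<longrightarrow>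
           D - \<delta> \<le> bsum (\<lambda>x. h (x 0, x 1)) n z)"
      using lower[OF X Z ij dp] unfolding D_def by blast
    show ?thesis unfolding eventually_at_right_field
    proof (intro exI[of _ e] conjI allI impI)
      fix \<epsilon> :: real assume "\<epsilon> > 0" "\<epsilon> < e"
      then show "ereal (D - \<delta>) \<le> I \<epsilon>" unfolding I_def using e(2)
        by (intro INF_greatest) auto
    qed (use e in auto)
  qed
  have tends: "(I \<longlongrightarrow> ereal D) (at_right 0)"
  proof (rule order_tendstoI)
    fix a assume a: "a < ereal D"
    obtain \<delta> where \<delta>: "\<delta> > 0" "a < ereal (D - \<delta>)"
    proof (cases a)
      case (real r)
      then show ?thesis using a by (intro that[of "(D - r) / 2"]) (auto simp: field_simps)
    next
      case PInf then show ?thesis using a by simp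
    next
      case MInf then show ?thesis using that[of 1] by simp
    qed
    show "\<forall>\<^sub>F \<epsilon> in at_right 0. a < I \<epsilon>"
      using low[OF \<delta>(1)] by eventually_elim (use \<delta>(2) in auto)
  next
    fix a assume a: "ereal D < a"
    have "\<forall>\<^sub>F \<epsilon> in at_right (0::real). \<epsilon> > 0" by (simp add: eventually_at_right_field) (meson zero_less_one)
    then show "\<forall>\<^sub>F \<epsilon> in at_right 0. I \<epsilon> < a"
      by eventually_elim (use up a in \<open>auto intro: le_less_trans\<close>)
  qed
  have "mane_pot (\<lambda>x. h (x 0, x 1)) ((shift ^^ i) x) ((shift ^^ j) x) = Lim (at_right 0) I"
    unfolding mane_pot_def I_def ..
  also have "\<dots> = ereal D" by (rule tendsto_Lim[OF trivial_limit_at_right_real tends])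
  finally show ?thesis unfolding D_def .
qed

lemma ss_of:
  assumes X: "x \<in> Xset"
    and Z: "\<And>p q. p < q \<Longrightarrow> (shift ^^ p) x = (shift ^^ q) x \<Longrightarrow> (\<Sum>n\<in>{p..<q}. h (x n, x (Suc n)) - hstar h) = 0"
  shows "semi_static (\<lambda>x. h (x 0, x 1)) x"
  unfolding ss_iff
proof (intro allI impI)
  fix i j :: nat assume ij: "i < j"
  show "ereal (\<Sum>n\<in>{i..<j}. h (x n, x (Suc n)) - hstar h) = mane_pot (\<lambda>x. h (x 0, x 1)) ((shift ^^ i) x) ((shift ^^ j) x)"
    by (rule mane_pot_eq[OF X Z ij, symmetric])
qed

lemma Z_pre:
  assumes X: "x \<in> Xset" and M: "(shift ^^ M) x = (\<lambda>_. a)" and a: "a \<in> min_set h"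
    and pq: "p < q" and eq: "(shift ^^ p) x = (shift ^^ q) x"
  shows "(\<Sum>n\<in>{p..<q}. h (x n, x (Suc n)) - hstar h) = 0"
proof -
  define P where "P = q - p"
  have P: "P \<ge> 1" using pq by (simp add: P_def)
  have perx: "x (p + k) = x (q + k)" for k using fun_cong[OF eq, of k] by (simp add: shift_pow_apply)
  have perP: "x (m + P) = x m" if "m \<ge> p" for m
  proof -
    have "x (p + (m - p)) = x (q + (m - p))" by (rule perx)
    moreover have "p + (m - p) = m" "q + (m - p) = m + P" using that pq by (auto simp: P_def)
    ultimately show ?thesis by simp
  qed
  have pert: "x (m + t * P) = x m" if "m \<ge> p" for m t
  proof (induction t)
    case 0 then show ?case by simp
  next
    case (Suc t)
    have "x (m + Suc t * P) = x ((m + t * P) + P)" by (simp add: algebra_simps)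
    also have "\<dots> = x (m + t * P)" using perP[of "m + t * P"] that by simp
    finally show ?case using Suc by simp
  qed
  have xa: "x m = a" if "m \<ge> p" for m
  proof -
    have "M \<le> m + M * P" using P by (simp add: trans_le_add2)
    then have "x (m + M * P) = (shift ^^ M) x (m + M * P - M)" by (simp add: shift_pow_apply)
    then have "x (m + M * P) = a" using M by simp
    then show ?thesis using pert[OF that, of M] by simp
  qed
  have ha: "h (a, a) = hstar h" using a by (simp add: min_set_def)
  show ?thesis
  proof (rule sum.neutral, rule ballI)
    fix n assume "n \<in> {p..<q}"
    then have "x n = a" "x (Suc n) = a" using xa[of n] xa[of "Suc n"] by auto
    then show "h (x n, x (Suc n)) - hstar h = 0" using ha by simp
  qed
qed

end


theorem theorem3:
  fixes h :: "real \<times> real \<Rightarrow> real"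
  assumes "C2_square_neg_mixed h"
  shows "mane_set (\<lambda>x. h (x 0, x 1)) =
           {x \<in> Xset. \<forall>i j. i \<noteq> j \<longrightarrow> (shift ^^ i) x \<noteq> (shift ^^ j) x}
           \<union> (\<Union>M. {x \<in> Xset. (shift ^^ M) x \<in> {(\<lambda>_. a) | a. a \<in> min_set h}})"
proof -
  obtain h1 h2 h11 h12 h21 h22 where H: "\<forall>p\<in>{0..1} \<times> {0..1}.
         (h has_derivative (\<lambda>(u, v). h1 p * u + h2 p * v)) (at p within {0..1} \<times> {0..1}) \<and>
         (h1 has_derivative (\<lambda>(u, v). h11 p * u + h12 p * v)) (at p within {0..1} \<times> {0..1}) \<and>
         (h2 has_derivative (\<lambda>(u, v). h21 p * u + h22 p * v)) (at p within {0..1} \<times> {0..1}) \<and>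
         h12 p < 0"
    using assms unfolding C2_square_neg_mixed_def by blast
  interpret twist h h1 h2 h11 h12
  proof
    fix p assume "p \<in> Sq"
    then have p: "p \<in> {0..1} \<times> {0..1}" by (simp add: Sq_def)
    show "(h has_derivative (\<lambda>(u, v). h1 p * u + h2 p * v)) (at p within Sq)"
      using H p unfolding Sq_def by blast
    show "(h1 has_derivative (\<lambda>(u, v). h11 p * u + h12 p * v)) (at p within Sq)"
      using H p unfolding Sq_def by blast
    show "h12 p < 0" using H p by blast
  qed
  show ?thesis
  proof (rule set_eqI, rule iffI)
    fix y assume "y \<in> mane_set (\<lambda>x. h (x 0, x 1))"
    then show "y \<in> {x \<in> Xset. \<forall>i j. i \<noteq> j \<longrightarrow> (shift ^^ i) x \<noteq> (shift ^^ j) x}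
           \<union> (\<Union>M. {x \<in> Xset. (shift ^^ M) x \<in> {(\<lambda>_. a) | a. a \<in> min_set h}})"
      by (rule subset_dir)
  next
    fix x assume x: "x \<in> {x \<in> Xset. \<forall>i j. i \<noteq> j \<longrightarrow> (shift ^^ i) x \<noteq> (shift ^^ j) x}
           \<union> (\<Union>M. {x \<in> Xset. (shift ^^ M) x \<in> {(\<lambda>_. a) | a. a \<in> min_set h}})"
    have X: "x \<in> Xset" using x by auto
    have Z: "(\<Sum>n\<in>{p..<q}. h (x n, x (Suc n)) - hstar h) = 0"
      if pq: "p < q" and eq: "(shift ^^ p) x = (shift ^^ q) x" for p q
    proof (cases "\<forall>i j. i \<noteq> j \<longrightarrow> (shift ^^ i) x \<noteq> (shift ^^ j) x")
      case True
      then show ?thesis using pq eq by (metis less_irrefl)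
    next
      case False
      then obtain M a where M: "(shift ^^ M) x = (\<lambda>_. a)" "a \<in> min_set h" using x by blast
      show ?thesis by (rule Z_pre[OF X M pq eq])
    qed
    have "semi_static (\<lambda>x. h (x 0, x 1)) x" by (rule ss_of[OF X Z])
    then have "(shift ^^ 0) x \<in> mane_set (\<lambda>x. h (x 0, x 1))"
      unfolding mane_set_def using X by blast
    then show "x \<in> mane_set (\<lambda>x. h (x 0, x 1))" by simp
  qed
qed

end
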